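(* Let $H$ be an RB function for $\mathcal X_r$, $\eta\ge\max_{p\in\mathcal Q}H(\mathbf f[p])$, $\epsilon>0$, and let $\mathcal V(\vec a,\vec x,\epsilon)$ be a $1-\epsilon$ confidence region for $\frac1n\sum_{j=1}^n\mathbf f[p_{\vec a_{j-1},\vec x_{j-1}}]$, with associated set $V$. Then for every $(\vec a,\vec x)\in V$, $$-\log_2P(\vec a\mid\vec x)\ge nH(\mathcal V(\vec a,\vec x,\epsilon))-\nu(\vec x)\eta .$$
   Context: Setting. A Bell device consists of $k$ boxes; box $i$ takes inputs in a finite set $\mathcal X_i$ and produces outputs in a finite set $\mathcal A_i$; $\mathcal X=\prod_i\mathcal X_i$, $\mathcal A=\prod_i\mathcal A_i$. A single-round behavior is $p=(p(a\mid x))_{a\in\mathcal A,x\in\mathcal X}$; $\mathcal Q$ is the set of quantum behaviors (those realizable by a $k$-partite quantum state and local measurements on each box). A Bell expression is $f\in\mathbb R^{|\mathcal A|\times|\mathcal X|}$ with $f[p]=\sum_{a,x}f(a,x)p(a\mid x)$; fix $\mathbf f=(f_1,\dots,f_t)$, $\mathbf f[p]=(f_1[p],\dots,f_t[p])$, $\mathbf f[\mathcal Q]=\{\mathbf f[p]:p\in\mathcal Q\}$. $n$-round model. $\vec x\in\mathcal X^n$, $\vec a\in\mathcal A^n$, prefixes $\vec x_j,\vec a_j$ (empty for $j=0$). An $n$-round device behavior is $P(\vec a\mid\vec x)=\prod_{j=1}^n p_{\vec a_{j-1},\vec x_{j-1}}(a_j\mid x_j)$ with every $p_{\vec a_{j-1},\vec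 x_{j-1}}\in\mathcal Q$. Inputs are drawn according to $\Pi(\vec x)=\prod_j\pi(x_j)$ for a probability distribution $\pi$ on $\mathcal X$, and $P(\vec a,\vec x)=P(\vec a\mid\vec x)\Pi(\vec x)$ defines the joint distribution $P_{AX}$. RB function. For a nonempty $\mathcal X_r\subseteq\mathcal X$, $H:\mathbf f[\mathcal Q]\to[0,\log_2|\mathcal A|]$ is RB if (1) $\min_{a\in\mathcal A,x\in\mathcal X_r}(-\log_2p(a\mid x))\ge H(\mathbf f[p])$ for all $p\in\mathcal Q$ and (2) $H(q\mathbf f[p_1]+(1-q)\mathbf f[p_2])\le qH(\mathbf f[p_1])+(1-q)H(\mathbf f[p_2])$ for $q\in[0,1]$, $p_1,p_2\in\mathcal Q$. For a set $\mathcal V\subseteq\mathbb R^t$, $H(\mathcal V)$ denotes a fixed number satisfying $H(\mathcal V)\le\inf\{H(\mathbf y):\mathbf y\in\mathbf f[\mathcal Q]\cap\mathcal V\}$, and $H(\mathcal V)=0$ if $\mathbf f[\mathcal Q]\cap\mathcal V=\emptyset$. $\nu(\vec x)$ is the number of $j$ with $x_j\notin\mathcal X_r$. Confidence region. A $1-\epsilon$ confidence region is an assignment $(\vec a,\vec x)\mapsto\mathcal V(\vec a,\vec x,\epsilon)\subseteq\mathbb R^t$ such that for every $n$-round device behavior, $\Pr_{P_{AX}}\big[\frac1n\sum_{j=1}^n\mathbf f[p_{\vec a_{j-1},\vec x_{j-1}}]\in\mathcal V(\vec a,\vec x,\epsilon)\big]\ge1-\epsilon$. The associated set is $V=\{(\vec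 a,\vec x):\frac1n\sum_{j=1}^n\mathbf f[p_{\vec a_{j-1},\vec x_{j-1}}]\in\mathcal V(\vec a,\vec x,\epsilon)\}$. *)

theory Defs
  imports "HOL-Analysis.Analysis"
begin

text \<open>A single-round behavior p is a function with p a x = p(a|x).
  The t Bell expressions are indexed by a finite type 't; f i a x = f_i(a,x).\<close>

type_synonym ('a, 'x) behavior = "'a \<Rightarrow> 'x \<Rightarrow> real"

definition neglog2 :: "real \<Rightarrow> ereal" where
  "neglog2 u = (if u = 0 then \<infinity> else ereal (- log 2 u))"

definition is_behavior :: "('a::finite, 'x) behavior \<Rightarrow> bool" where
  "is_behavior p \<longleftrightarrow> (\<forall>x. (\<forall>a. 0 \<le> p a x) \<and> (\<Sum>a\<in>UNIV. p a x) = 1)"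

definition fval :: "('t::finite \<Rightarrow> ('a::finite, 'x::finite) behavior) \<Rightarrow> ('a, 'x) behavior \<Rightarrow> real ^ 't" where
  "fval f p = (\<chi> i. \<Sum>a\<in>UNIV. \<Sum>x\<in>UNIV. f i a x * p a x)"

definition behavior_set_convex :: "('a, 'x) behavior set \<Rightarrow> bool" where
  "behavior_set_convex Q \<longleftrightarrow>
     (\<forall>p1\<in>Q. \<forall>p2\<in>Q. \<forall>q::real. 0 \<le> q \<and> q \<le> 1 \<longrightarrow> (\<lambda>a x. q * p1 a x + (1 - q) * p2 a x) \<in> Q)"

definition RB :: "('a::finite, 'x::finite) behavior set \<Rightarrow> ('t::finite \<Rightarrow> ('a, 'x) behavior)
                  \<Rightarrow> 'x set \<Rightarrow> (real ^ 't \<Rightarrow> real) \<Rightarrow> bool" where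
  "RB Q f Xr H \<longleftrightarrow>
     (\<forall>p\<in>Q. 0 \<le> H (fval f p) \<and> H (fval f p) \<le> log 2 (real CARD('a))) \<and>
     (\<forall>p\<in>Q. \<forall>a. \<forall>x\<in>Xr. ereal (H (fval f p)) \<le> neglog2 (p a x)) \<and>
     (\<forall>p1\<in>Q. \<forall>p2\<in>Q. \<forall>q::real. 0 \<le> q \<and> q \<le> 1 \<longrightarrow>
        H (q *\<^sub>R fval f p1 + (1 - q) *\<^sub>R fval f p2) \<le> q * H (fval f p1) + (1 - q) * H (fval f p2))"

text \<open>An n-round device behavior: D as xs = p_{as,xs} for prefixes of length < n.\<close>
definition device :: "('a, 'x) behavior set \<Rightarrow> nat \<Rightarrow> ('a list \<Rightarrow> 'x list \<Rightarrow> ('a, 'x) behavior) \<Rightarrow> bool" where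
  "device Q n D \<longleftrightarrow> (\<forall>as xs. length as = length xs \<and> length xs < n \<longrightarrow> D as xs \<in> Q)"

definition Pn :: "nat \<Rightarrow> ('a list \<Rightarrow> 'x list \<Rightarrow> ('a, 'x) behavior) \<Rightarrow> 'a list \<Rightarrow> 'x list \<Rightarrow> real" where
  "Pn n D as xs = (\<Prod>j<n. D (take j as) (take j xs) (as ! j) (xs ! j))"

definition Pi_in :: "nat \<Rightarrow> ('x \<Rightarrow> real) \<Rightarrow> 'x list \<Rightarrow> real" where
  "Pi_in n \<pi> xs = (\<Prod>j<n. \<pi> (xs ! j))"

definition avgf :: "nat \<Rightarrow> ('t::finite \<Rightarrow> ('a::finite, 'x::finite) behavior)
                    \<Rightarrow> ('a list \<Rightarrow> 'x list \<Rightarrow> ('a, 'x) behavior) \<Rightarrow> 'a list \<Rightarrow> 'x list \<Rightarrow> real ^ 't" where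
  "avgf n f D as xs = (1 / real n) *\<^sub>R (\<Sum>j<n. fval f (D (take j as) (take j xs)))"

definition nu :: "nat \<Rightarrow> 'x set \<Rightarrow> 'x list \<Rightarrow> nat" where
  "nu n Xr xs = card {j. j < n \<and> xs ! j \<notin> Xr}"

definition confidence_region ::
  "('a::finite, 'x::finite) behavior set \<Rightarrow> ('t::finite \<Rightarrow> ('a, 'x) behavior) \<Rightarrow> nat \<Rightarrow> ('x \<Rightarrow> real)
   \<Rightarrow> ('a list \<Rightarrow> 'x list \<Rightarrow> real \<Rightarrow> (real ^ 't) set) \<Rightarrow> real \<Rightarrow> bool" where
  "confidence_region Q f n \<pi> Vr eps \<longleftrightarrow>
     (\<forall>D. device Q n D \<longrightarrow>
        (\<Sum>as\<in>{as. length as = n}. \<Sum>xs\<in>{xs. length xs = n}.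
           (if avgf n f D as xs \<in> Vr as xs eps then Pn n D as xs * Pi_in n \<pi> xs else 0)) \<ge> 1 - eps)"

definition assoc_set ::
  "('t::finite \<Rightarrow> ('a::finite, 'x::finite) behavior) \<Rightarrow> nat \<Rightarrow> ('a list \<Rightarrow> 'x list \<Rightarrow> ('a, 'x) behavior)
   \<Rightarrow> ('a list \<Rightarrow> 'x list \<Rightarrow> real \<Rightarrow> (real ^ 't) set) \<Rightarrow> real \<Rightarrow> ('a list \<times> 'x list) set" where
  "assoc_set f n D Vr eps = {(as, xs). length as = n \<and> length xs = n \<and> avgf n f D as xs \<in> Vr as xs eps}"

end

theory Submission
  imports Defs
begin

lemma fval_comb:
  "fval f (\<lambda>a x. q * p1 a x + (1 - q) * p2 a x) = q *\<^sub>R fval f p1 + (1 - q) *\<^sub>R fval f p2"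
proof -
  have "\<And>i. (\<Sum>a\<in>UNIV. \<Sum>x\<in>UNIV. f i a x * (q * p1 a x + (1 - q) * p2 a x))
     = q * (\<Sum>a\<in>UNIV. \<Sum>x\<in>UNIV. f i a x * p1 a x) + (1 - q) * (\<Sum>a\<in>UNIV. \<Sum>x\<in>UNIV. f i a x * p2 a x)"
    by (simp add: sum_distrib_left sum.distrib distrib_left mult.left_commute)
  thus ?thesis unfolding fval_def by (simp add: vec_eq_iff)
qed

lemma jensen_aux:
  assumes conv: "behavior_set_convex Q" and RB: "RB Q f Xr H"
  shows "0 < m \<Longrightarrow> (\<forall>j<m. g j \<in> Q) \<Longrightarrow> \<exists>p\<in>Q. fval f p = (1 / real m) *\<^sub>R (\<Sum>j<m. fval f (g j))
      \<and> H (fval f p) \<le> (1 / real m) * (\<Sum>j<m. H (fval f (g j)))"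
proof (induction m)
  case 0 then show ?case by simp
next
  case (Suc m)
  show ?case
  proof (cases "m = 0")
    case True
    then show ?thesis using Suc.prems by (intro bexI[of _ "g 0"]) auto
  next
    case False
    then obtain p where pQ: "p \<in> Q" and fp: "fval f p = (1 / real m) *\<^sub>R (\<Sum>j<m. fval f (g j))"
      and Hp: "H (fval f p) \<le> (1 / real m) * (\<Sum>j<m. H (fval f (g j)))"
      using Suc by auto
    define q where "q = real m / real (Suc m)"
    have q01: "0 \<le> q" "q \<le> 1" unfolding q_def by auto
    have gm: "g m \<in> Q" using Suc.prems by auto
    define r where "r = (\<lambda>a x. q * p a x + (1 - q) * g m a x)"
    have rQ: "r \<in> Q" using conv pQ gm q01 unfolding behavior_set_convex_def r_def by blast
    have mpos: "real m > 0" using False by simp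
    have q1: "1 - q = 1 / real (Suc m)" unfolding q_def by (simp add: field_simps)
    have qm: "q * (1 / real m) = 1 / real (Suc m)" unfolding q_def using mpos by (simp add: field_simps)
    have "fval f r = q *\<^sub>R fval f p + (1 - q) *\<^sub>R fval f (g m)" unfolding r_def by (rule fval_comb)
    also have "\<dots> = (1 / real (Suc m)) *\<^sub>R (\<Sum>j<Suc m. fval f (g j))"
      unfolding fp scaleR_scaleR qm q1 by (simp add: scaleR_right_distrib)
    finally have e1: "fval f r = (1 / real (Suc m)) *\<^sub>R (\<Sum>j<Suc m. fval f (g j))" .
    have "H (fval f r) \<le> q * H (fval f p) + (1 - q) * H (fval f (g m))"
      using RB pQ gm q01 unfolding RB_def fval_comb[symmetric] r_def by blast
    also have "\<dots> \<le> q * ((1 / real m) * (\<Sum>j<m. H (fval f (g j)))) + (1 - q) * H (fval f (g m))"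
      using mult_left_mono[OF Hp q01(1)] by simp
    also have "\<dots> = (1 / real (Suc m)) * (\<Sum>j<Suc m. H (fval f (g j)))"
      unfolding mult.assoc[symmetric] qm q1 by (simp add: distrib_left)
    finally show ?thesis using rQ e1 by blast
  qed
qed

theorem lemma2:
  fixes Q :: "('a::finite, 'x::finite) behavior set"
    and f :: "'t::finite \<Rightarrow> ('a, 'x) behavior"
    and Xr :: "'x set"
    and H :: "real ^ 't \<Rightarrow> real"
    and HV :: "(real ^ 't) set \<Rightarrow> real"
    and \<eta> eps :: real
    and n :: nat
    and \<pi> :: "'x \<Rightarrow> real"
    and Vr :: "'a list \<Rightarrow> 'x list \<Rightarrow> real \<Rightarrow> (real ^ 't) set"
    and D :: "'a list \<Rightarrow> 'x list \<Rightarrow> ('a, 'x) behavior"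
  assumes Q_beh: "\<forall>p\<in>Q. is_behavior p"
    and Q_convex: "behavior_set_convex Q"
    and Xr_ne: "Xr \<noteq> {}"
    and RB: "RB Q f Xr H"
    and HV_le: "\<forall>S. \<forall>y\<in>(fval f ` Q) \<inter> S. HV S \<le> H y"
    and HV_empty: "\<forall>S. (fval f ` Q) \<inter> S = {} \<longrightarrow> HV S = 0"
    and eta: "\<forall>p\<in>Q. H (fval f p) \<le> \<eta>"
    and eps: "eps > 0"
    and pi_dist: "(\<forall>x. 0 \<le> \<pi> x) \<and> (\<Sum>x\<in>UNIV. \<pi> x) = 1"
    and conf: "confidence_region Q f n \<pi> Vr eps"
    and dev: "device Q n D"
  shows "\<forall>(as, xs) \<in> assoc_set f n D Vr eps.
           neglog2 (Pn n D as xs) \<ge> ereal (real n * HV (Vr as xs eps) - real (nu n Xr xs) * \<eta>)"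
proof (clarify)
  fix as xs assume A: "(as, xs) \<in> assoc_set f n D Vr eps"
  hence len: "length as = n" "length xs = n" and inV: "avgf n f D as xs \<in> Vr as xs eps"
    unfolding assoc_set_def by auto
  define g where "g j = D (take j as) (take j xs)" for j
  define pj where "pj j = g j (as ! j) (xs ! j)" for j
  have gQ: "\<forall>j<n. g j \<in> Q" using dev len unfolding device_def g_def by auto
  have P: "Pn n D as xs = (\<Prod>j<n. pj j)" unfolding Pn_def pj_def g_def ..
  have pj0: "0 \<le> pj j" if "j < n" for j
    using gQ Q_beh that unfolding is_behavior_def pj_def by blast
  have pj1: "pj j \<le> 1" if "j < n" for j
  proof -
    have b: "is_behavior (g j)" using gQ Q_beh that by blast
    hence "pj j \<le> (\<Sum>a\<in>UNIV. g j a (xs ! j))" unfolding pj_def is_behavior_def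
      by (intro member_le_sum) auto
    thus ?thesis using b unfolding is_behavior_def by simp
  qed
  show "ereal (real n * HV (Vr as xs eps) - real (nu n Xr xs) * \<eta>) \<le> neglog2 (Pn n D as xs)"
  proof (cases "\<exists>j<n. pj j = 0")
    case True
    hence "Pn n D as xs = 0" unfolding P by (simp add: prod_zero_iff) blast
    thus ?thesis unfolding neglog2_def by simp
  next
    case False
    hence pos: "\<And>j. j < n \<Longrightarrow> pj j > 0" using pj0 by (metis less_le)
    hence Ppos: "Pn n D as xs \<noteq> 0" unfolding P by (metis (no_types) lessThan_iff less_irrefl prod_pos)
    have logP: "- log 2 (Pn n D as xs) = (\<Sum>j<n. - log 2 (pj j))"
    proof -
      have "ln (\<Prod>j<n. pj j) = (\<Sum>j<n. ln (pj j))"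
        using pos by (intro ln_prod) (auto, metis less_irrefl)
      thus ?thesis unfolding P log_def by (simp add: sum_divide_distrib sum_negf)
    qed
    have tm: "H (fval f (g j)) - (if xs ! j \<notin> Xr then \<eta> else 0) \<le> - log 2 (pj j)" if j: "j < n" for j
    proof (cases "xs ! j \<in> Xr")
      case True
      have "ereal (H (fval f (g j))) \<le> neglog2 (pj j)"
        using RB gQ j True unfolding RB_def pj_def by blast
      thus ?thesis using True pos[OF j] unfolding neglog2_def by simp
    next
      case False
      have "H (fval f (g j)) \<le> \<eta>" using eta gQ j by blast
      moreover have "log 2 (pj j) \<le> 0" using pos[OF j] pj1[OF j] by simp
      ultimately show ?thesis using False by simp
    qed
    have sumnu: "(\<Sum>j<n. (if xs ! j \<notin> Xr then \<eta> else 0)) = real (nu n Xr xs) * \<eta>"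
    proof -
      have "(\<Sum>j<n. (if xs ! j \<notin> Xr then \<eta> else 0)) = (\<Sum>j\<in>{j\<in>{..<n}. xs ! j \<notin> Xr}. \<eta>)"
        by (rule sum.inter_filter[symmetric]) simp
      also have "{j\<in>{..<n}. xs ! j \<notin> Xr} = {j. j < n \<and> xs ! j \<notin> Xr}" by auto
      finally show ?thesis unfolding nu_def by simp
    qed
    have HVb: "real n * HV (Vr as xs eps) \<le> (\<Sum>j<n. H (fval f (g j)))"
    proof (cases "n = 0")
      case True then show ?thesis by simp
    next
      case False
      then obtain p where pQ: "p \<in> Q" and fp: "fval f p = (1 / real n) *\<^sub>R (\<Sum>j<n. fval f (g j))"
        and Hp: "H (fval f p) \<le> (1 / real n) * (\<Sum>j<n. H (fval f (g j)))"
        using jensen_aux[OF Q_convex RB, of n g] gQ by auto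
      have "fval f p = avgf n f D as xs" unfolding fp avgf_def g_def ..
      hence "fval f p \<in> fval f ` Q \<inter> Vr as xs eps" using pQ inV by (metis IntI imageI)
      hence "HV (Vr as xs eps) \<le> H (fval f p)" using HV_le by blast
      hence "HV (Vr as xs eps) \<le> (1 / real n) * (\<Sum>j<n. H (fval f (g j)))" using Hp by linarith
      thus ?thesis using False by (simp add: field_simps)
    qed
    have "(\<Sum>j<n. H (fval f (g j)) - (if xs ! j \<notin> Xr then \<eta> else 0)) \<le> (\<Sum>j<n. - log 2 (pj j))"
      by (rule sum_mono) (use tm in auto)
    hence "real n * HV (Vr as xs eps) - real (nu n Xr xs) * \<eta> \<le> - log 2 (Pn n D as xs)"
      using HVb sumnu logP by (simp add: sum_subtractf)
    thus ?thesis using Ppos unfolding neglog2_def by simp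
  qed
qed

end
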